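(* Let $n=2$ and let $M$ be a Griffiths positive $2\times 2$ matrix of constant coefficient $(1,1)$-forms on $\mathbb{C}^2$. Then $\det(M)$ is a Hodge-Riemann form (with respect to any Kähler form $\omega$).
   Context: $V^{p,q}$ is the space of constant coefficient $(p,q)$-forms on $\mathbb{C}^n$; $V^{k,k}_{\mathbb{R}}$ is the set of real forms $\Omega=\overline{\Omega}$ in $V^{k,k}$. A $(1,1)$-form is Kähler if it equals $\sum_l\frac{\sqrt{-1}}{2}dw_l\wedge d\overline{w_l}$ in some complex linear coordinates. A matrix $M=(\alpha_{i,j})$ of $(1,1)$-forms with $\alpha_{i,j}=\overline{\alpha_{j,i}}$ is Griffiths positive if $\sum_{i,j}\theta_i\alpha_{i,j}\overline{\theta_j}$ is Kähler for all nonzero $\theta$; $\det(M)=\alpha_{1,1}\wedge\alpha_{2,2}-\alpha_{1,2}\wedge\alpha_{2,1}$. A form $\Omega\in V^{k,k}$ is a Lefschetz form for bidegree $(p,q)$ (with $p+q=n-k$) if $\alpha\mapsto\alpha\wedge\Omega$ is an isomorphism $V^{p,q}\to V^{n-q,n-p}$. Given a Kähler form $\omega$, $\Omega\in V^{k,k}_{\mathbb{R}}$ is a Hodge-Riemann form if for every $(p,q)$ with $p,q\geqslant 0$, $p+q=n-k$, there is a continuous path $\Omega_t\in V^{k,k}_{\mathbb{R}}$, $t\in[0,1]$, with $\Omega_0=\Omega$, $\Omega_1=\omega^k$, such that $\Omega_t\wedge\omega^{2r}$ is a Lefschetz form for bidegree $(p-r,q-r)$ for all $0\leqslant r\leqslant\min\{p,q\}$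 and all $t\in[0,1]$. *)

theory Defs
  imports "HOL-Analysis.Analysis"
begin

text \<open>We use the generators
  e_0,...,e_{2n-1} of the complex exterior algebra, where e_j = dz_j and
  e_{n+j} = dzbar_j for j < n.  A form is given by its coefficient function:
  f S is the coefficient of e_{s_1} wedge ... wedge e_{s_m}, where
  s_1 < ... < s_m enumerate the finite set S.\<close>

type_synonym form = "nat set \<Rightarrow> complex"

definition shuffle_sign :: "nat set \<Rightarrow> nat set \<Rightarrow> complex" where
  "shuffle_sign A B = (-1) ^ card {(a, b). a \<in> A \<and> b \<in> B \<and> b < a}"

definition wedge :: "form \<Rightarrow> form \<Rightarrow> form" where
  "wedge f g = (\<lambda>S. \<Sum>A\<in>Pow S. shuffle_sign A (S - A) * f A * g (S - A))"

definition unit_form :: form where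
  "unit_form = (\<lambda>S. if S = {} then 1 else 0)"

primrec wpow :: "form \<Rightarrow> nat \<Rightarrow> form" where
  "wpow f 0 = unit_form"
| "wpow f (Suc k) = wedge f (wpow f k)"

definition Vpq :: "nat \<Rightarrow> nat \<Rightarrow> nat \<Rightarrow> form set" where
  "Vpq n p q = {f. \<forall>S. f S \<noteq> 0 \<longrightarrow>
      S \<subseteq> {..<2*n} \<and> card (S \<inter> {..<n}) = p \<and> card (S \<inter> {n..<2*n}) = q}"

text \<open>Conjugation swaps dz_j and dzbar_j and conjugates coefficients.\<close>
definition swap_idx :: "nat \<Rightarrow> nat \<Rightarrow> nat" where
  "swap_idx n j = (if j < n then j + n else if j < 2*n then j - n else j)"

definition conj_inv :: "nat \<Rightarrow> nat set \<Rightarrow> nat" where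
  "conj_inv n S = card {(a, b). a \<in> S \<and> b \<in> S \<and> a < b \<and> swap_idx n b < swap_idx n a}"

definition conj_form :: "nat \<Rightarrow> form \<Rightarrow> form" where
  "conj_form n f = (\<lambda>T. (-1) ^ conj_inv n (swap_idx n ` T) * cnj (f (swap_idx n ` T)))"

definition VR :: "nat \<Rightarrow> nat \<Rightarrow> form set" where
  "VR n k = {f \<in> Vpq n k k. conj_form n f = f}"

text \<open>The (1,0)-form sum_j v_j dz_j.\<close>
definition dz_form :: "nat \<Rightarrow> (nat \<Rightarrow> complex) \<Rightarrow> form" where
  "dz_form n v = (\<lambda>S. if is_singleton S \<and> the_elem S < n then v (the_elem S) else 0)"

definition invertible_mat :: "nat \<Rightarrow> (nat \<Rightarrow> nat \<Rightarrow> complex) \<Rightarrow> bool" where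
  "invertible_mat n A \<longleftrightarrow> (\<exists>B. \<forall>i<n. \<forall>j<n.
      (\<Sum>k<n. A i k * B k j) = (if i = j then 1 else 0))"

text \<open>Kaehler: equals sum_l (i/2) dw_l wedge conj(dw_l) for linear coordinates w = A z.\<close>
definition kaehler :: "nat \<Rightarrow> form \<Rightarrow> bool" where
  "kaehler n \<alpha> \<longleftrightarrow> (\<exists>A. invertible_mat n A \<and>
      \<alpha> = (\<lambda>S. \<Sum>l<n. (\<i> / 2) *
              wedge (dz_form n (A l)) (conj_form n (dz_form n (A l))) S))"

definition griffiths_positive :: "nat \<Rightarrow> nat \<Rightarrow> (nat \<Rightarrow> nat \<Rightarrow> form) \<Rightarrow> bool" where
  "griffiths_positive n r M \<longleftrightarrow>
     (\<forall>i<r. \<forall>j<r. M i j = conj_form n (M j i)) \<and>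
     (\<forall>\<theta> :: nat \<Rightarrow> complex. (\<exists>i<r. \<theta> i \<noteq> 0) \<longrightarrow>
        kaehler n (\<lambda>S. \<Sum>i<r. \<Sum>j<r. \<theta> i * M i j S * cnj (\<theta> j)))"

definition det2 :: "(nat \<Rightarrow> nat \<Rightarrow> form) \<Rightarrow> form" where
  "det2 M = (\<lambda>S. wedge (M 0 0) (M 1 1) S - wedge (M 0 1) (M 1 0) S)"

definition lefschetz :: "nat \<Rightarrow> nat \<Rightarrow> nat \<Rightarrow> form \<Rightarrow> bool" where
  "lefschetz n p q \<Omega> \<longleftrightarrow> bij_betw (\<lambda>\<alpha>. wedge \<alpha> \<Omega>) (Vpq n p q) (Vpq n (n - q) (n - p))"

definition hodge_riemann :: "nat \<Rightarrow> form \<Rightarrow> nat \<Rightarrow> form \<Rightarrow> bool" where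
  "hodge_riemann n \<omega> k \<Omega> \<longleftrightarrow> \<Omega> \<in> VR n k \<and>
     (\<forall>p q. p + q = n - k \<longrightarrow>
        (\<exists>P :: real \<Rightarrow> form.
            (\<forall>S. continuous_on {0..1} (\<lambda>t. P t S)) \<and>
            P 0 = \<Omega> \<and> P 1 = wpow \<omega> k \<and>
            (\<forall>t\<in>{0..1}. P t \<in> VR n k) \<and>
            (\<forall>r \<le> min p q. \<forall>t\<in>{0..1}.
                lefschetz n (p - r) (q - r) (wedge (P t) (wpow \<omega> (2 * r))))))"

end

theory Submission
  imports Defs
begin


lemma swap_idx_inv[simp]: "swap_idx n (swap_idx n j) = j"
  unfolding swap_idx_def by (cases "j < n"; cases "j < 2*n"; simp)

lemma swap_image_inv[simp]: "swap_idx n ` swap_idx n ` T = T"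
  by (simp add: image_image)

lemma Vpq_sub: "f \<in> Vpq n p q \<Longrightarrow> f S \<noteq> 0 \<Longrightarrow> S \<subseteq> {..<2*n}"
  by (auto simp: Vpq_def)

lemma Vpq_card1: "f \<in> Vpq n p q \<Longrightarrow> f S \<noteq> 0 \<Longrightarrow> card (S \<inter> {..<n}) = p"
  by (auto simp: Vpq_def)

lemma Vpq_card2: "f \<in> Vpq n p q \<Longrightarrow> f S \<noteq> 0 \<Longrightarrow> card (S \<inter> {n..<2*n}) = q"
  by (auto simp: Vpq_def)

lemma wedge_eq_sub:
  assumes "finite S" "X \<subseteq> Pow S" "\<forall>A\<in>Pow S - X. f A * g (S - A) = 0"
  shows "wedge f g S = (\<Sum>A\<in>X. shuffle_sign A (S - A) * f A * g (S - A))"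
  unfolding wedge_def
  by (rule sum.mono_neutral_right) (use assms in auto)

lemma wedge_Vpq:
  assumes f: "f \<in> Vpq n p q" and g: "g \<in> Vpq n p' q'"
  shows "wedge f g \<in> Vpq n (p+p') (q+q')"
  unfolding Vpq_def mem_Collect_eq
proof (intro allI impI)
  fix S assume "wedge f g S \<noteq> 0"
  then obtain A where A: "A \<in> Pow S" "shuffle_sign A (S - A) * f A * g (S - A) \<noteq> 0"
    unfolding wedge_def by (meson sum.not_neutral_contains_not_neutral)
  hence fA: "f A \<noteq> 0" and gA: "g (S - A) \<noteq> 0" by auto
  have SA: "S = A \<union> (S - A)" using A by auto
  have s1: "A \<subseteq> {..<2*n}" "S - A \<subseteq> {..<2*n}" using Vpq_sub[OF f fA] Vpq_sub[OF g gA] by auto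
  hence fin: "finite A" "finite (S - A)" by (auto intro: finite_subset)
  have "card (S \<inter> X) = card (A \<inter> X) + card ((S - A) \<inter> X)" for X
  proof -
    have "S \<inter> X = (A \<inter> X) \<union> ((S - A) \<inter> X)" using SA by blast
    moreover have "card ((A \<inter> X) \<union> ((S - A) \<inter> X)) = card (A \<inter> X) + card ((S - A) \<inter> X)"
      by (rule card_Un_disjoint) (use fin in auto)
    ultimately show ?thesis by simp
  qed
  thus "S \<subseteq> {..<2 * n} \<and> card (S \<inter> {..<n}) = p + p' \<and> card (S \<inter> {n..<2 * n}) = q + q'"
    using s1 SA Vpq_card1[OF f fA] Vpq_card1[OF g gA] Vpq_card2[OF f fA] Vpq_card2[OF g gA]
    by (metis Un_subset_iff)
qed


lemma split4: "S \<subseteq> {..<4::nat} \<Longrightarrow> S = (S \<inter> {..<2}) \<union> (S \<inter> {2..<4})"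
  by auto

lemma V22_support: assumes "f \<in> Vpq 2 2 2" "f S \<noteq> 0" shows "S = {0,1,2,3}"
proof -
  have s: "S \<subseteq> {..<4}" using Vpq_sub[OF assms] by simp
  have "S \<inter> {..<2} = {..<2}"
    by (rule card_subset_eq) (use Vpq_card1[OF assms] in auto)
  moreover have "S \<inter> {2..<4} = {2..<4}"
    by (rule card_subset_eq) (use Vpq_card2[OF assms] in auto)
  ultimately have "S = {..<2} \<union> {2..<4}" using split4[OF s] by simp
  thus ?thesis by auto
qed

lemma V00_support: assumes "f \<in> Vpq 2 0 0" "f S \<noteq> 0" shows "S = {}"
proof -
  have s: "S \<subseteq> {..<4}" using Vpq_sub[OF assms] by simp
  have f: "finite S" using s finite_subset by blast
  have "S \<inter> {..<2} = {}" using Vpq_card1[OF assms] f by simp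
  moreover have "S \<inter> {2..<4} = {}" using Vpq_card2[OF assms] f by simp
  ultimately show ?thesis using split4[OF s] by simp
qed

lemma card1_lt2: "card (S \<inter> {..<2::nat}) = 1 \<Longrightarrow> S \<inter> {..<2} = {0} \<or> S \<inter> {..<2} = {1}"
proof -
  assume "card (S \<inter> {..<2::nat}) = 1"
  then obtain x where x: "S \<inter> {..<2} = {x}" by (auto simp: card_1_singleton_iff)
  hence "x \<in> {..<2}" by auto
  hence "x = 0 \<or> x = 1" by auto
  thus ?thesis using x by auto
qed

lemma card1_24: "card (S \<inter> {2..<4::nat}) = 1 \<Longrightarrow> S \<inter> {2..<4} = {2} \<or> S \<inter> {2..<4} = {3}"
proof -
  assume "card (S \<inter> {2..<4::nat}) = 1"
  then obtain x where x: "S \<inter> {2..<4} = {x}" by (auto simp: card_1_singleton_iff)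
  hence "x \<in> {2..<4}" by auto
  hence "x = 2 \<or> x = 3" by auto
  thus ?thesis using x by auto
qed

lemma V11_support: assumes "f \<in> Vpq 2 1 1" "f S \<noteq> 0"
  shows "S = {0,2} \<or> S = {0,3} \<or> S = {1,2} \<or> S = {1,3}"
proof -
  have s: "S \<subseteq> {..<4}" using Vpq_sub[OF assms] by simp
  have a: "S \<inter> {..<2} = {0} \<or> S \<inter> {..<2} = {1}" using card1_lt2 Vpq_card1[OF assms] by simp
  have b: "S \<inter> {2..<4} = {2} \<or> S \<inter> {2..<4} = {3}" using card1_24 Vpq_card2[OF assms] by simp
  have "S = (S \<inter> {..<2}) \<union> (S \<inter> {2..<4})" using split4[OF s] .
  with a b show ?thesis by (elim disjE) (simp_all add: insert_commute)
qed


definition qf :: "(nat \<Rightarrow> nat \<Rightarrow> complex) \<Rightarrow> complex \<Rightarrow> complex \<Rightarrow> complex" where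
  "qf F x0 x1 = F 0 0 * x0 * cnj x0 + F 0 1 * x0 * cnj x1 + F 1 0 * x1 * cnj x0 + F 1 1 * x1 * cnj x1"

definition DD :: "(nat \<Rightarrow> nat \<Rightarrow> complex) \<Rightarrow> (nat \<Rightarrow> nat \<Rightarrow> complex) \<Rightarrow> complex" where
  "DD F G = F 0 0 * G 1 1 + F 1 1 * G 0 0 - F 0 1 * G 1 0 - F 1 0 * G 0 1"

definition GG where "GG a B C c t0 t1 x0 x1 =
  t0 * cnj t0 * qf a x0 x1 + t0 * cnj t1 * qf B x0 x1 + t1 * cnj t0 * qf C x0 x1 + t1 * cnj t1 * qf c x0 x1"

lemma core_step:
  assumes herm: "\<forall>u v. C u v = cnj (B v u)"
    and pos: "\<forall>t0 t1 x0 x1. (t0 \<noteq> 0 \<or> t1 \<noteq> 0) \<longrightarrow> (x0 \<noteq> 0 \<or> x1 \<noteq> 0) \<longrightarrow>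
                 (\<exists>N>0. GG a B C c t0 t1 x0 x1 = of_real N)"
    and x: "x0 \<noteq> 0 \<or> x1 \<noteq> 0"
  shows "\<exists>Na Nc. Na > 0 \<and> Nc > 0 \<and> qf a x0 x1 = of_real Na \<and> qf c x0 x1 = of_real Nc \<and>
           (cmod (qf B x0 x1))\<^sup>2 < Na * Nc"
proof -
  obtain Na where Na: "Na > 0" "GG a B C c 1 0 x0 x1 = of_real Na" using pos x by (metis one_neq_zero)
  hence qa: "qf a x0 x1 = of_real Na" by (simp add: GG_def)
  obtain Nc where Nc: "Nc > 0" "GG a B C c 0 1 x0 x1 = of_real Nc" using pos x by (metis one_neq_zero)
  hence qc: "qf c x0 x1 = of_real Nc" by (simp add: GG_def)
  define \<beta> where "\<beta> = qf B x0 x1"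
  have qC: "qf C x0 x1 = cnj \<beta>" using herm by (simp add: qf_def \<beta>_def algebra_simps)
  have ne: "complex_of_real Na \<noteq> 0" using Na by simp
  obtain N where N: "N > 0" "GG a B C c (- cnj \<beta>) (of_real Na) x0 x1 = of_real N"
    using pos x ne by blast
  have "GG a B C c (- cnj \<beta>) (of_real Na) x0 x1 = of_real (Na * (Na * Nc - (cmod \<beta>)\<^sup>2))"
    unfolding GG_def qa qc qC \<beta>_def[symmetric] of_real_mult of_real_diff complex_norm_square
    by (simp add: algebra_simps)
  hence "Na * (Na * Nc - (cmod \<beta>)\<^sup>2) = N" using N(2) of_real_eq_iff by metis
  hence "Na * (Na * Nc - (cmod \<beta>)\<^sup>2) > 0" using N(1) by simp
  hence "(cmod \<beta>)\<^sup>2 < Na * Nc" using Na(1) by (simp add: zero_less_mult_iff)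
  thus ?thesis using Na(1) Nc(1) qa qc \<beta>_def by blast
qed

lemma amgm:
  fixes u v p r a c :: real
  assumes "0 \<le> u" "0 \<le> v" "u\<^sup>2 < p * r" "v\<^sup>2 < a * c" "p > 0" "r > 0" "a > 0" "c > 0"
  shows "2 * u * v < p * c + a * r"
proof -
  have "u\<^sup>2 * v\<^sup>2 < (p * r) * (a * c)"
    by (rule mult_strict_mono) (use assms in auto)
  also have "\<dots> \<le> ((p * c + a * r) / 2)\<^sup>2"
  proof -
    have "0 \<le> (p * c - a * r)\<^sup>2" by simp
    thus ?thesis by (simp add: power2_eq_square algebra_simps)
  qed
  finally have "(u * v)\<^sup>2 < ((p * c + a * r) / 2)\<^sup>2" by (simp add: power_mult_distrib)
  hence "u * v < (p * c + a * r) / 2"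
    by (rule power_less_imp_less_base) (use assms in auto)
  thus ?thesis by simp
qed

lemma re_cross: "Re (b * cnj z + cnj b * z) \<le> 2 * cmod b * cmod z"
proof -
  have "Re (b * cnj z + cnj b * z) = 2 * Re (b * cnj z)" by simp
  also have "\<dots> \<le> 2 * cmod (b * cnj z)" using complex_Re_le_cmod[of "b * cnj z"] by linarith
  also have "\<dots> = 2 * cmod b * cmod z" by (simp add: norm_mult)
  finally show ?thesis .
qed


lemma core_identity:
  assumes "a 1 0 = cnj (a 0 1)" "cnj (a 0 0) = a 0 0" "cnj (a 1 1) = a 1 1"
    "c 1 0 = cnj (c 0 1)" "cnj (c 0 0) = c 0 0" "cnj (c 1 1) = c 1 1"
    "\<forall>u v. C u v = cnj (B v u)"
  shows "a 0 0 * a 0 0 * (DD a c - DD B C) =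
     a 0 0 * qf c (- a 1 0) (a 0 0) + qf a (- a 1 0) (a 0 0) * c 0 0
     - (B 0 0 * cnj (qf B (- a 1 0) (a 0 0)) + cnj (B 0 0) * qf B (- a 1 0) (a 0 0))
     + (B 0 1 * a 0 0 - B 0 0 * a 0 1) * cnj (B 0 1 * a 0 0 - B 0 0 * a 0 1)
     + (B 1 0 * a 0 0 - B 0 0 * a 1 0) * cnj (B 1 0 * a 0 0 - B 0 0 * a 1 0)"
  using assms unfolding qf_def DD_def
  by (simp add: algebra_simps)

lemma core_real:
  assumes "a 1 0 = cnj (a 0 1)" "cnj (a 0 0) = a 0 0" "cnj (a 1 1) = a 1 1"
    "c 1 0 = cnj (c 0 1)" "cnj (c 0 0) = c 0 0" "cnj (c 1 1) = c 1 1"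
    "\<forall>u v. C u v = cnj (B v u)"
  shows "cnj (DD a c - DD B C) = DD a c - DD B C"
  using assms unfolding DD_def
  by (simp add: algebra_simps)


lemma core:
  assumes h: "a 1 0 = cnj (a 0 1)" "cnj (a 0 0) = a 0 0" "cnj (a 1 1) = a 1 1"
    "c 1 0 = cnj (c 0 1)" "cnj (c 0 0) = c 0 0" "cnj (c 1 1) = c 1 1"
    and herm: "\<forall>u v. C u v = cnj (B v u)"
    and pos: "\<forall>t0 t1 x0 x1. (t0 \<noteq> 0 \<or> t1 \<noteq> 0) \<longrightarrow> (x0 \<noteq> 0 \<or> x1 \<noteq> 0) \<longrightarrow>
                 (\<exists>N>0. GG a B C c t0 t1 x0 x1 = of_real N)"
  shows "\<exists>N>0. DD a c - DD B C = of_real N"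
proof -
  obtain p r where pr: "p > 0" "r > 0" "qf a 1 0 = of_real p" "qf c 1 0 = of_real r"
    "(cmod (qf B 1 0))\<^sup>2 < p * r"
    using core_step[OF herm pos, of 1 0] by auto
  have a00: "a 0 0 = of_real p" and c00: "c 0 0 = of_real r" and b00: "qf B 1 0 = B 0 0"
    using pr by (simp_all add: qf_def)
  have x2: "- a 1 0 \<noteq> 0 \<or> a 0 0 \<noteq> 0" using pr a00 by simp
  obtain p2 r2 where pr2: "p2 > 0" "r2 > 0" "qf a (- a 1 0) (a 0 0) = of_real p2"
    "qf c (- a 1 0) (a 0 0) = of_real r2" "(cmod (qf B (- a 1 0) (a 0 0)))\<^sup>2 < p2 * r2"
    using core_step[OF herm pos x2] by auto
  define Q where "Q = DD a c - DD B C"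
  define \<beta> where "\<beta> = qf B (- a 1 0) (a 0 0)"
  define y1 where "y1 = B 0 1 * a 0 0 - B 0 0 * a 0 1"
  define y2 where "y2 = B 1 0 * a 0 0 - B 0 0 * a 1 0"
  have "Q \<in> \<real>" using core_real[OF h herm] by (simp add: Reals_cnj_iff Q_def)
  hence Qr: "Q = of_real (Re Q)" by (simp add: of_real_Re)
  have id: "a 0 0 * a 0 0 * Q = of_real (p * r2) + of_real (p2 * r)
     - (B 0 0 * cnj \<beta> + cnj (B 0 0) * \<beta>) + of_real ((cmod y1)\<^sup>2) + of_real ((cmod y2)\<^sup>2)"
    unfolding complex_norm_square y1_def y2_def \<beta>_def Q_def core_identity[OF h herm]
    using a00 c00 pr2 by simp
  have "Re (a 0 0 * a 0 0 * Q) = p * p * Re Q" using a00 Qr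
    by (metis Re_complex_of_real of_real_mult)
  also have "Re (a 0 0 * a 0 0 * Q) = p * r2 + p2 * r - Re (B 0 0 * cnj \<beta> + cnj (B 0 0) * \<beta>)
      + (cmod y1)\<^sup>2 + (cmod y2)\<^sup>2"
    unfolding id by simp
  finally have e: "p * p * Re Q = p * r2 + p2 * r - Re (B 0 0 * cnj \<beta> + cnj (B 0 0) * \<beta>)
      + (cmod y1)\<^sup>2 + (cmod y2)\<^sup>2" ..
  have "2 * cmod (B 0 0) * cmod \<beta> < p * r2 + p2 * r"
    by (rule amgm) (use pr pr2 b00 \<beta>_def in auto)
  moreover have "Re (B 0 0 * cnj \<beta> + cnj (B 0 0) * \<beta>) \<le> 2 * cmod (B 0 0) * cmod \<beta>"
    by (rule re_cross)
  moreover have "0 \<le> (cmod y1)\<^sup>2" "0 \<le> (cmod y2)\<^sup>2" by simp_all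
  ultimately have "p * p * Re Q > 0" using e by linarith
  hence "Re Q > 0" using pr(1) by (simp add: zero_less_mult_iff)
  thus ?thesis using Qr Q_def by blast
qed



lemma V10_support: assumes "f \<in> Vpq 2 1 0" "f S \<noteq> 0"
  shows "S = {0} \<or> S = {1}"
proof -
  have s: "S \<subseteq> {..<4}" using Vpq_sub[OF assms] by simp
  have f: "finite S" using s finite_subset by blast
  have a: "S \<inter> {..<2} = {0} \<or> S \<inter> {..<2} = {1}" using card1_lt2 Vpq_card1[OF assms] by simp
  have b: "S \<inter> {2..<4} = {}" using Vpq_card2[OF assms] f by simp
  have "S = (S \<inter> {..<2}) \<union> (S \<inter> {2..<4})" using split4[OF s] .
  with a b show ?thesis by (elim disjE) simp_all
qed

lemma V01_support: assumes "f \<in> Vpq 2 0 1" "f S \<noteq> 0"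
  shows "S = {2} \<or> S = {3}"
proof -
  have s: "S \<subseteq> {..<4}" using Vpq_sub[OF assms] by simp
  have f: "finite S" using s finite_subset by blast
  have a: "S \<inter> {..<2} = {}" using Vpq_card1[OF assms] f by simp
  have b: "S \<inter> {2..<4} = {2} \<or> S \<inter> {2..<4} = {3}" using card1_24 Vpq_card2[OF assms] by simp
  have "S = (S \<inter> {..<2}) \<union> (S \<inter> {2..<4})" using split4[OF s] .
  with a b show ?thesis by (elim disjE) simp_all
qed

lemma Vpq_infinite: "f \<in> Vpq n p q \<Longrightarrow> infinite S \<Longrightarrow> f S = 0"
proof (rule ccontr)
  assume "f \<in> Vpq n p q" "infinite S" "f S \<noteq> 0"
  thus False using Vpq_sub[of f n p q S] finite_subset[of S "{..<2*n}"] by simp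
qed

lemma wedge_infinite: "infinite S \<Longrightarrow> wedge f g S = 0"
  unfolding wedge_def by (rule sum.infinite) simp

lemma wedge_unit_right: assumes "f \<in> Vpq n p q" shows "wedge f unit_form = f"
proof
  fix S show "wedge f unit_form S = f S"
  proof (cases "finite S")
    case True
    have "wedge f unit_form S = (\<Sum>A\<in>{S}. shuffle_sign A (S - A) * f A * unit_form (S - A))"
      by (rule wedge_eq_sub) (use True in \<open>auto simp: unit_form_def\<close>)
    also have "\<dots> = f S" by (simp add: shuffle_sign_def unit_form_def)
    finally show ?thesis .
  next
    case False thus ?thesis using Vpq_infinite[OF assms] wedge_infinite by simp
  qed
qed

lemma wedge_V00_left: assumes a: "\<alpha> \<in> Vpq 2 0 0" and O: "\<Omega> \<in> Vpq n p q"
  shows "wedge \<alpha> \<Omega> = (\<lambda>S. \<alpha> {} * \<Omega> S)"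
proof
  fix S show "wedge \<alpha> \<Omega> S = \<alpha> {} * \<Omega> S"
  proof (cases "finite S")
    case True
    have "wedge \<alpha> \<Omega> S = (\<Sum>A\<in>{{}}. shuffle_sign A (S - A) * \<alpha> A * \<Omega> (S - A))"
      by (rule wedge_eq_sub) (use True V00_support[OF a] in auto)
    also have "\<dots> = \<alpha> {} * \<Omega> S" by (simp add: shuffle_sign_def)
    finally show ?thesis .
  next
    case False thus ?thesis using Vpq_infinite[OF O] wedge_infinite by simp
  qed
qed

abbreviation "top4 \<equiv> {0,1,2,3::nat}"

lemma lefschetz_top: assumes O: "\<Omega> \<in> Vpq 2 2 2" and nz: "\<Omega> top4 \<noteq> 0"
  shows "lefschetz 2 0 0 \<Omega>"
  unfolding lefschetz_def bij_betw_def
proof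
  show "inj_on (\<lambda>\<alpha>. wedge \<alpha> \<Omega>) (Vpq 2 0 0)"
  proof (rule inj_onI)
    fix \<alpha> \<beta> assume a: "\<alpha> \<in> Vpq 2 0 0" and b: "\<beta> \<in> Vpq 2 0 0" and e: "wedge \<alpha> \<Omega> = wedge \<beta> \<Omega>"
    have "\<alpha> {} * \<Omega> top4 = \<beta> {} * \<Omega> top4"
      using e wedge_V00_left[OF a O] wedge_V00_left[OF b O] by metis
    hence e0: "\<alpha> {} = \<beta> {}" using nz by simp
    show "\<alpha> = \<beta>"
    proof
      fix S show "\<alpha> S = \<beta> S"
      proof (cases "S = {}")
        case True thus ?thesis using e0 by simp
      next
        case False
        hence "\<alpha> S = 0" "\<beta> S = 0" using V00_support[OF a, of S] V00_support[OF b, of S] by blast+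
        thus ?thesis by simp
      qed
    qed
  qed
next
  show "(\<lambda>\<alpha>. wedge \<alpha> \<Omega>) ` Vpq 2 0 0 = Vpq (2::nat) (2 - 0) (2 - 0)"
  proof
    show "(\<lambda>\<alpha>. wedge \<alpha> \<Omega>) ` Vpq 2 0 0 \<subseteq> Vpq 2 (2 - 0) (2 - 0)"
    proof
      fix g assume "g \<in> (\<lambda>\<alpha>. wedge \<alpha> \<Omega>) ` Vpq 2 0 0"
      then obtain \<alpha> where a: "\<alpha> \<in> Vpq 2 0 0" and g: "g = wedge \<alpha> \<Omega>" by auto
      have "g = (\<lambda>S. \<alpha> {} * \<Omega> S)" using g wedge_V00_left[OF a O] by simp
      thus "g \<in> Vpq 2 (2 - 0) (2 - 0)" using O by (auto simp: Vpq_def)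
    qed
  next
    show "Vpq 2 (2 - 0) (2 - 0) \<subseteq> (\<lambda>\<alpha>. wedge \<alpha> \<Omega>) ` Vpq 2 0 0"
    proof
      fix g assume g: "g \<in> Vpq (2::nat) (2 - 0) (2 - 0)"
      hence g2: "g \<in> Vpq 2 2 2" by simp
      define \<alpha> where "\<alpha> = (\<lambda>S::nat set. if S = {} then g top4 / \<Omega> top4 else 0)"
      have a: "\<alpha> \<in> Vpq 2 0 0" by (auto simp: Vpq_def \<alpha>_def)
      have "wedge \<alpha> \<Omega> = g"
      proof
        fix S
        show "wedge \<alpha> \<Omega> S = g S"
        proof (cases "S = top4")
          case True thus ?thesis using wedge_V00_left[OF a O] nz by (simp add: \<alpha>_def)
        next
          case False
          hence "\<Omega> S = 0" "g S = 0" using V22_support[OF O, of S] V22_support[OF g2, of S] by auto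
          thus ?thesis using wedge_V00_left[OF a O] by simp
        qed
      qed
      thus "g \<in> (\<lambda>\<alpha>. wedge \<alpha> \<Omega>) ` Vpq 2 0 0" using a by blast
    qed
  qed
qed



lemma sum2: "(\<Sum>k<(2::nat). f k) = f 0 + f 1"
  by (simp add: numeral_2_eq_2)

lemma ss_02: "shuffle_sign {0,2} {1,3} = -1"
proof -
  have "{(a, b). a \<in> {0,2::nat} \<and> b \<in> {1,3} \<and> b < a} = {(2,1)}" by auto
  thus ?thesis by (simp add: shuffle_sign_def)
qed
lemma ss_03: "shuffle_sign {0,3} {1,2} = 1"
proof -
  have "{(a, b). a \<in> {0,3::nat} \<and> b \<in> {1,2} \<and> b < a} = {(3,1),(3,2)}" by auto
  thus ?thesis by (simp add: shuffle_sign_def)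
qed
lemma ss_12: "shuffle_sign {1,2} {0,3} = 1"
proof -
  have "{(a, b). a \<in> {1,2::nat} \<and> b \<in> {0,3} \<and> b < a} = {(1,0),(2,0)}" by auto
  thus ?thesis by (simp add: shuffle_sign_def)
qed
lemma ss_13: "shuffle_sign {1,3} {0,2} = -1"
proof -
  have "{(a, b). a \<in> {1,3::nat} \<and> b \<in> {0,2} \<and> b < a} = {(1,0),(3,0),(3,2)}" by auto
  thus ?thesis by (simp add: shuffle_sign_def)
qed

lemma sum4:
  assumes "a \<noteq> b" "a \<noteq> c" "a \<noteq> d" "b \<noteq> c" "b \<noteq> d" "c \<noteq> d"
  shows "(\<Sum>A\<in>{a,b,c,d}. F A) = F a + F b + F c + F d"
  using assms by (simp add: algebra_simps)

lemma d02: "top4 - {0,2} = {1,3}" by auto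
lemma d03: "top4 - {0,3} = {1,2}" by auto
lemma d12: "top4 - {1,2} = {0,3}" by auto
lemma d13: "top4 - {1,3} = {0,2}" by auto

lemma wedge_top:
  assumes f: "f \<in> Vpq 2 1 1"
  shows "wedge f g top4 = - f{0,2}*g{1,3} + f{0,3}*g{1,2} + f{1,2}*g{0,3} - f{1,3}*g{0,2}"
proof -
  have "wedge f g top4 = (\<Sum>A\<in>{{0,2},{0,3},{1,2},{1,3}}. shuffle_sign A (top4 - A) * f A * g (top4 - A))"
  proof (rule wedge_eq_sub)
    show "\<forall>A\<in>Pow top4 - {{0,2},{0,3},{1,2},{1,3}}. f A * g (top4 - A) = 0"
    proof
      fix A assume "A \<in> Pow top4 - {{0,2},{0,3},{1,2},{1,3}}"
      hence "f A = 0" using V11_support[OF f, of A] by blast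
      thus "f A * g (top4 - A) = 0" by simp
    qed
  qed auto
  also have "\<dots> = shuffle_sign {0,2} (top4 - {0,2}) * f {0,2} * g (top4 - {0,2})
      + shuffle_sign {0,3} (top4 - {0,3}) * f {0,3} * g (top4 - {0,3})
      + shuffle_sign {1,2} (top4 - {1,2}) * f {1,2} * g (top4 - {1,2})
      + shuffle_sign {1,3} (top4 - {1,3}) * f {1,3} * g (top4 - {1,3})"
    by (rule sum4) (simp_all add: doubleton_eq_iff)
  also have "\<dots> = - f{0,2}*g{1,3} + f{0,3}*g{1,2} + f{1,2}*g{0,3} - f{1,3}*g{0,2}"
    unfolding ss_02 ss_03 ss_12 ss_13 d02 d03 d12 d13 by simp
  finally show ?thesis .
qed

lemma conj_inv_pair: "a < b \<Longrightarrow> conj_inv n {a,b} = (if swap_idx n b < swap_idx n a then 1 else 0)"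
proof -
  assume ab: "a < b"
  have "{(x, y). x \<in> {a,b} \<and> y \<in> {a,b} \<and> x < y \<and> swap_idx n y < swap_idx n x} =
        (if swap_idx n b < swap_idx n a then {(a,b)} else {})" using ab by auto
  thus ?thesis by (simp add: conj_inv_def)
qed

lemma conj_inv_single: "conj_inv n {a} = 0"
  unfolding conj_inv_def card_eq_0_iff by auto

lemma conj_inv_top: "conj_inv 2 top4 = 4"
proof -
  have "{(x, y). x \<in> top4 \<and> y \<in> top4 \<and> x < y \<and> swap_idx 2 y < swap_idx 2 x} = {(0,2),(0,3),(1,2),(1,3)}"
    by (auto simp: swap_idx_def)
  thus ?thesis by (simp add: conj_inv_def)
qed

lemma sw_02: "swap_idx 2 ` {0,2} = {0,2}" by (auto simp: swap_idx_def)
lemma sw_03: "swap_idx 2 ` {0,3} = {1,2}" by (auto simp: swap_idx_def)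
lemma sw_12: "swap_idx 2 ` {1,2} = {0,3}" by (auto simp: swap_idx_def)
lemma sw_13: "swap_idx 2 ` {1,3} = {1,3}" by (auto simp: swap_idx_def)
lemma sw_top: "swap_idx 2 ` top4 = top4" by (auto simp: swap_idx_def)

lemma ci_02: "conj_inv 2 {0,2} = 1" by (simp add: conj_inv_pair swap_idx_def)
lemma ci_03: "conj_inv 2 {0,3} = 1" by (simp add: conj_inv_pair swap_idx_def)
lemma ci_12: "conj_inv 2 {1,2} = 1" by (simp add: conj_inv_pair swap_idx_def)
lemma ci_13: "conj_inv 2 {1,3} = 1" by (simp add: conj_inv_pair swap_idx_def)
lemma cf_02: "conj_form 2 f {0,2} = - cnj (f {0,2})"
  unfolding conj_form_def sw_02 ci_02 ci_03 ci_12 ci_13 by simp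
lemma cf_03: "conj_form 2 f {0,3} = - cnj (f {1,2})"
  unfolding conj_form_def sw_03 ci_02 ci_03 ci_12 ci_13 by simp
lemma cf_12: "conj_form 2 f {1,2} = - cnj (f {0,3})"
  unfolding conj_form_def sw_12 ci_02 ci_03 ci_12 ci_13 by simp
lemma cf_13: "conj_form 2 f {1,3} = - cnj (f {1,3})"
  unfolding conj_form_def sw_13 ci_02 ci_03 ci_12 ci_13 by simp

lemma conj_top:
  assumes supp: "\<forall>S. f S \<noteq> 0 \<longrightarrow> S = top4" and r: "cnj (f top4) = f top4"
  shows "conj_form 2 f = f"
proof
  fix T show "conj_form 2 f T = f T"
  proof (cases "T = top4")
    case True
    have "conj_form 2 f top4 = (-1) ^ conj_inv 2 (swap_idx 2 ` top4) * cnj (f (swap_idx 2 ` top4))"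
      unfolding conj_form_def by (rule refl)
    also have "\<dots> = f top4" unfolding sw_top conj_inv_top using r by simp
    finally show ?thesis using True by simp
  next
    case False
    have "swap_idx 2 ` T \<noteq> top4"
    proof
      assume h: "swap_idx 2 ` T = top4"
      have "T = swap_idx 2 ` (swap_idx 2 ` T)" by (simp only: swap_image_inv)
      also have "\<dots> = swap_idx 2 ` top4" by (simp only: h)
      also have "\<dots> = top4" by (rule sw_top)
      finally show False using False by contradiction
    qed
    hence z: "f (swap_idx 2 ` T) = 0" using supp by meson
    have "f T = 0" using supp False by meson
    thus ?thesis unfolding conj_form_def using z by simp
  qed
qed



lemma is_singleton_single: "is_singleton {x}"
  by (simp add: is_singleton_def)

lemma dz_V10: "dz_form 2 v \<in> Vpq 2 1 0"
  unfolding Vpq_def mem_Collect_eq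
proof (intro allI impI)
  fix S assume "dz_form 2 v S \<noteq> 0"
  hence "is_singleton S" "the_elem S < 2" by (auto simp: dz_form_def split: if_splits)
  then obtain x where "S = {x}" "x < 2" by (auto simp: is_singleton_def)
  thus "S \<subseteq> {..<2 * 2} \<and> card (S \<inter> {..<2}) = 1 \<and> card (S \<inter> {2..<2 * 2}) = 0" by auto
qed

lemma dz_val: "dz_form 2 v {j} = (if j < 2 then v j else 0)"
  by (simp add: dz_form_def is_singleton_single)

lemma cdz_V01: "conj_form 2 (dz_form 2 v) \<in> Vpq 2 0 1"
  unfolding Vpq_def mem_Collect_eq
proof (intro allI impI)
  fix T assume "conj_form 2 (dz_form 2 v) T \<noteq> 0"
  hence "dz_form 2 v (swap_idx 2 ` T) \<noteq> 0" by (auto simp: conj_form_def)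
  hence "is_singleton (swap_idx 2 ` T)" "the_elem (swap_idx 2 ` T) < 2"
    by (auto simp: dz_form_def split: if_splits)
  then obtain x where x: "swap_idx 2 ` T = {x}" "x < 2" by (auto simp: is_singleton_def)
  have "T = swap_idx 2 ` (swap_idx 2 ` T)" by (simp only: swap_image_inv)
  also have "\<dots> = {x + 2}" using x by (simp add: swap_idx_def)
  finally have "T = {x + 2}" .
  thus "T \<subseteq> {..<2 * 2} \<and> card (T \<inter> {..<2}) = 0 \<and> card (T \<inter> {2..<2 * 2}) = 1" using x by auto
qed

lemma cdz_val: "k < 2 \<Longrightarrow> conj_form 2 (dz_form 2 v) {2 + k} = cnj (v k)"
proof -
  assume k: "k < 2"
  have "swap_idx 2 ` {2 + k} = {k}" using k by (simp add: swap_idx_def)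
  thus ?thesis using k unfolding conj_form_def by (simp add: conj_inv_single dz_val)
qed

lemma wedge_10_01:
  assumes f: "f \<in> Vpq 2 1 0" and j: "j < 2" and k: "k < 2"
  shows "wedge f g {j, 2 + k} = f {j} * g {2 + k}"
proof -
  have "wedge f g {j, 2 + k} = (\<Sum>A\<in>{{j}}. shuffle_sign A ({j, 2 + k} - A) * f A * g ({j, 2 + k} - A))"
  proof (rule wedge_eq_sub)
    show "\<forall>A\<in>Pow {j, 2 + k} - {{j}}. f A * g ({j, 2 + k} - A) = 0"
    proof
      fix A assume A: "A \<in> Pow {j, 2 + k} - {{j}}"
      have "f A = 0"
      proof (rule ccontr)
        assume "f A \<noteq> 0"
        hence "A = {0} \<or> A = {1}" using V10_support[OF f] by blast
        thus False using A j k by auto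
      qed
      thus "f A * g ({j, 2 + k} - A) = 0" by simp
    qed
  qed auto
  also have "\<dots> = shuffle_sign {j} {2 + k} * f {j} * g {2 + k}"
  proof -
    have "{j, 2 + k} - {j} = {2 + k}" using j by auto
    thus ?thesis by simp
  qed
  also have "shuffle_sign {j} {2 + k} = 1"
  proof -
    have "{(a, b). a \<in> {j} \<and> b \<in> {2 + k} \<and> b < a} = {}" using j by auto
    thus ?thesis unfolding shuffle_sign_def by (metis card.empty power_0)
  qed
  finally show ?thesis by simp
qed

lemma Vpq_sum:
  assumes "\<forall>l\<in>L. F l \<in> Vpq n p q"
  shows "(\<lambda>S. \<Sum>l\<in>L. c l * F l S) \<in> Vpq n p q"
  unfolding Vpq_def mem_Collect_eq
proof (intro allI impI)
  fix S assume "(\<Sum>l\<in>L. c l * F l S) \<noteq> 0"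
  then obtain l where "l \<in> L" "c l * F l S \<noteq> 0" by (meson sum.not_neutral_contains_not_neutral)
  hence "F l \<in> Vpq n p q" "F l S \<noteq> 0" using assms by auto
  thus "S \<subseteq> {..<2 * n} \<and> card (S \<inter> {..<n}) = p \<and> card (S \<inter> {n..<2 * n}) = q"
    by (auto simp: Vpq_def)
qed

lemma kaehler_coeff:
  assumes "kaehler 2 \<omega>"
  obtains A where "invertible_mat 2 A" "\<omega> \<in> Vpq 2 1 1"
    "\<And>j k. j < 2 \<Longrightarrow> k < 2 \<Longrightarrow> \<omega> {j, 2 + k} = \<i> / 2 * (\<Sum>l<2. A l j * cnj (A l k))"
proof -
  obtain A where A: "invertible_mat 2 A"
    "\<omega> = (\<lambda>S. \<Sum>l<2. (\<i> / 2) * wedge (dz_form 2 (A l)) (conj_form 2 (dz_form 2 (A l))) S)"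
    using assms unfolding kaehler_def by blast
  have W: "wedge (dz_form 2 (A l)) (conj_form 2 (dz_form 2 (A l))) \<in> Vpq 2 1 1" for l
    using wedge_Vpq[OF dz_V10 cdz_V01] by simp
  have V: "\<omega> \<in> Vpq 2 1 1" unfolding A(2) by (rule Vpq_sum) (use W in auto)
  have C: "\<omega> {j, 2 + k} = \<i> / 2 * (\<Sum>l<2. A l j * cnj (A l k))" if "j < 2" "k < 2" for j k
  proof -
    have w: "wedge (dz_form 2 (A l)) (conj_form 2 (dz_form 2 (A l))) {j, 2 + k} = A l j * cnj (A l k)" for l
      using wedge_10_01[OF dz_V10 that, of "A l" "conj_form 2 (dz_form 2 (A l))"] dz_val cdz_val that by simp
    have "\<omega> {j, 2 + k} = (\<Sum>l<2. (\<i> / 2) * wedge (dz_form 2 (A l)) (conj_form 2 (dz_form 2 (A l))) {j, 2 + k})"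
      unfolding A(2) by (rule refl)
    also have "\<dots> = (\<Sum>l<2. (\<i> / 2) * (A l j * cnj (A l k)))" by (simp only: w)
    finally have "\<omega> {j, 2 + k} = (\<Sum>l<2. (\<i> / 2) * (A l j * cnj (A l k)))" .
    thus ?thesis by (simp add: sum_distrib_left)
  qed
  show ?thesis using A(1) V C that by blast
qed

definition hm :: "form \<Rightarrow> nat \<Rightarrow> nat \<Rightarrow> complex" where
  "hm f = (\<lambda>j k. -2 * \<i> * f {j, 2 + k})"

lemma inv_det:
  assumes "invertible_mat 2 A"
  shows "A 0 0 * A 1 1 - A 0 1 * A 1 0 \<noteq> 0"
proof -
  obtain B where B: "\<forall>i<2. \<forall>j<2. (\<Sum>k<2. A i k * B k j) = (if i = j then 1 else 0)"
    using assms unfolding invertible_mat_def by blast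
  have e: "A 0 0 * B 0 0 + A 0 1 * B 1 0 = 1" "A 0 0 * B 0 1 + A 0 1 * B 1 1 = 0"
    "A 1 0 * B 0 0 + A 1 1 * B 1 0 = 0" "A 1 0 * B 0 1 + A 1 1 * B 1 1 = 1"
    using B[rule_format, of 0 0] B[rule_format, of 0 1] B[rule_format, of 1 0] B[rule_format, of 1 1]
    by (simp_all add: sum2)
  have "(A 0 0 * A 1 1 - A 0 1 * A 1 0) * (B 0 0 * B 1 1 - B 0 1 * B 1 0) =
        (A 0 0 * B 0 0 + A 0 1 * B 1 0) * (A 1 0 * B 0 1 + A 1 1 * B 1 1)
        - (A 0 0 * B 0 1 + A 0 1 * B 1 1) * (A 1 0 * B 0 0 + A 1 1 * B 1 0)"
    by (simp add: algebra_simps)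
  also have "\<dots> = 1" using e by simp
  finally show ?thesis by auto
qed

lemma kaehler_pos:
  assumes K: "kaehler 2 K" and x: "x0 \<noteq> 0 \<or> x1 \<noteq> 0"
  shows "\<exists>N>0. qf (hm K) x0 x1 = of_real N"
proof -
  obtain A where A: "invertible_mat 2 A" "K \<in> Vpq 2 1 1"
    "\<And>j k. j < 2 \<Longrightarrow> k < 2 \<Longrightarrow> K {j, 2 + k} = \<i> / 2 * (\<Sum>l<2. A l j * cnj (A l k))"
    using kaehler_coeff[OF K] by blast
  have h: "hm K j k = A 0 j * cnj (A 0 k) + A 1 j * cnj (A 1 k)" if "j < 2" "k < 2" for j k
    using A(3)[OF that] by (simp add: hm_def sum2 algebra_simps)
  define y0 where "y0 = A 0 0 * x0 + A 0 1 * x1"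
  define y1 where "y1 = A 1 0 * x0 + A 1 1 * x1"
  have "qf (hm K) x0 x1 = y0 * cnj y0 + y1 * cnj y1"
    unfolding qf_def using h[of 0 0] h[of 0 1] h[of 1 0] h[of 1 1]
    by (simp add: y0_def y1_def algebra_simps)
  also have "\<dots> = of_real ((cmod y0)\<^sup>2 + (cmod y1)\<^sup>2)"
    by (simp only: of_real_add complex_norm_square)
  finally have q: "qf (hm K) x0 x1 = of_real ((cmod y0)\<^sup>2 + (cmod y1)\<^sup>2)" .
  have "y0 \<noteq> 0 \<or> y1 \<noteq> 0"
  proof (rule ccontr)
    assume "\<not> (y0 \<noteq> 0 \<or> y1 \<noteq> 0)"
    hence y: "y0 = 0" "y1 = 0" by auto
    define d where "d = A 0 0 * A 1 1 - A 0 1 * A 1 0"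
    have d: "d \<noteq> 0" using inv_det[OF A(1)] d_def by simp
    have "d * x0 = A 1 1 * y0 - A 0 1 * y1" by (simp add: d_def y0_def y1_def algebra_simps)
    hence "x0 = 0" using y d by simp
    moreover have "d * x1 = A 0 0 * y1 - A 1 0 * y0" by (simp add: d_def y0_def y1_def algebra_simps)
    hence "x1 = 0" using y d by simp
    ultimately show False using x by simp
  qed
  hence "(cmod y0)\<^sup>2 + (cmod y1)\<^sup>2 > 0"
    by (metis add_nonneg_pos add_pos_nonneg norm_eq_zero zero_less_norm_iff zero_le_power2 zero_less_power)
  thus ?thesis using q by blast
qed



lemma hm00: "hm f 0 0 = -2 * \<i> * f {0,2}" by (simp add: hm_def numeral_2_eq_2 numeral_3_eq_3)
lemma hm01: "hm f 0 1 = -2 * \<i> * f {0,3}" by (simp add: hm_def numeral_2_eq_2 numeral_3_eq_3)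
lemma hm10: "hm f 1 0 = -2 * \<i> * f {1,2}" by (simp add: hm_def numeral_2_eq_2 numeral_3_eq_3)
lemma hm11: "hm f 1 1 = -2 * \<i> * f {1,3}" by (simp add: hm_def numeral_2_eq_2 numeral_3_eq_3)

lemma herm_hm:
  assumes g: "g = conj_form 2 f" and a: "a < 2" and b: "b < 2"
  shows "hm g a b = cnj (hm f b a)"
proof -
  have "a = 0 \<or> a = 1" "b = 0 \<or> b = 1" using a b by auto
  thus ?thesis using g
    by (elim disjE; simp only: hm00 hm01 hm10 hm11 cf_02 cf_03 cf_12 cf_13) simp_all
qed

lemma wedge_top_DD:
  assumes "f \<in> Vpq 2 1 1"
  shows "4 * wedge f g top4 = DD (hm f) (hm g)"
  unfolding wedge_top[OF assms] DD_def hm00 hm01 hm10 hm11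
  by (simp add: algebra_simps)

lemma Vpq_lin: "f \<in> Vpq n p q \<Longrightarrow> g \<in> Vpq n p q \<Longrightarrow> (\<lambda>S. a * f S + b * g S) \<in> Vpq n p q"
  unfolding Vpq_def mem_Collect_eq
proof (intro allI impI)
  fix S assume f: "\<forall>S. f S \<noteq> 0 \<longrightarrow> S \<subseteq> {..<2 * n} \<and> card (S \<inter> {..<n}) = p \<and> card (S \<inter> {n..<2 * n}) = q"
    and g: "\<forall>S. g S \<noteq> 0 \<longrightarrow> S \<subseteq> {..<2 * n} \<and> card (S \<inter> {..<n}) = p \<and> card (S \<inter> {n..<2 * n}) = q"
    and "a * f S + b * g S \<noteq> 0"
  hence "f S \<noteq> 0 \<or> g S \<noteq> 0" by auto
  thus "S \<subseteq> {..<2 * n} \<and> card (S \<inter> {..<n}) = p \<and> card (S \<inter> {n..<2 * n}) = q"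
    using f g by blast
qed

lemma kaehler_top:
  assumes K: "kaehler 2 \<omega>"
  shows "\<exists>e>0. wpow \<omega> 2 top4 = of_real e" "wpow \<omega> 2 \<in> Vpq 2 2 2"
proof -
  obtain A where A: "invertible_mat 2 A" "\<omega> \<in> Vpq 2 1 1"
    "\<And>j k. j < 2 \<Longrightarrow> k < 2 \<Longrightarrow> \<omega> {j, 2 + k} = \<i> / 2 * (\<Sum>l<2. A l j * cnj (A l k))"
    using kaehler_coeff[OF K] by blast
  have h: "hm \<omega> j k = A 0 j * cnj (A 0 k) + A 1 j * cnj (A 1 k)" if "j < 2" "k < 2" for j k
    using A(3)[OF that] by (simp add: hm_def sum2 algebra_simps)
  have w2: "wpow \<omega> 2 = wedge \<omega> \<omega>"
    by (simp add: numeral_2_eq_2 wedge_unit_right[OF A(2)])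
  define d where "d = A 0 0 * A 1 1 - A 0 1 * A 1 0"
  have d: "d \<noteq> 0" using inv_det[OF A(1)] d_def by simp
  have "4 * wpow \<omega> 2 top4 = DD (hm \<omega>) (hm \<omega>)" unfolding w2 by (rule wedge_top_DD[OF A(2)])
  also have "\<dots> = 2 * (d * cnj d)"
    unfolding DD_def using h[of 0 0] h[of 0 1] h[of 1 0] h[of 1 1]
    by (simp add: d_def algebra_simps)
  also have "\<dots> = of_real (2 * (cmod d)\<^sup>2)" by (simp only: of_real_mult complex_norm_square) simp
  finally have "wpow \<omega> 2 top4 = of_real ((cmod d)\<^sup>2 / 2)"
    by (simp add: field_simps)
  moreover have "(cmod d)\<^sup>2 / 2 > 0" using d by simp
  ultimately show "\<exists>e>0. wpow \<omega> 2 top4 = of_real e" by blast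
  have "wedge \<omega> \<omega> \<in> Vpq 2 (1+1) (1+1)" by (rule wedge_Vpq[OF A(2) A(2)])
  thus "wpow \<omega> 2 \<in> Vpq 2 2 2" unfolding w2 one_add_one .
qed



theorem mainTheorem6:
  fixes M :: "nat \<Rightarrow> nat \<Rightarrow> form"
  assumes "\<forall>i<2. \<forall>j<2. M i j \<in> Vpq 2 1 1"
    and "griffiths_positive 2 2 M"
  shows "\<forall>\<omega>. kaehler 2 \<omega> \<longrightarrow> hodge_riemann 2 \<omega> 2 (det2 M)"
proof (intro allI impI)
  fix \<omega> assume K: "kaehler 2 \<omega>"
  have V00: "M 0 0 \<in> Vpq 2 1 1" using assms(1)[rule_format, of 0 0] by simp
  have V01: "M 0 1 \<in> Vpq 2 1 1" using assms(1)[rule_format, of 0 1] by simp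
  have V10: "M 1 0 \<in> Vpq 2 1 1" using assms(1)[rule_format, of 1 0] by simp
  have V11: "M 1 1 \<in> Vpq 2 1 1" using assms(1)[rule_format, of 1 1] by simp
  have herm: "\<forall>i<2. \<forall>j<2. M i j = conj_form 2 (M j i)"
    and pos: "\<forall>\<theta> :: nat \<Rightarrow> complex. (\<exists>i<2. \<theta> i \<noteq> 0) \<longrightarrow>
        kaehler 2 (\<lambda>S. \<Sum>i<2. \<Sum>j<2. \<theta> i * M i j S * cnj (\<theta> j))"
    using assms(2) unfolding griffiths_positive_def by blast+
  have h00: "M 0 0 = conj_form 2 (M 0 0)" and h11: "M 1 1 = conj_form 2 (M 1 1)"
    and h10: "M 1 0 = conj_form 2 (M 0 1)" using herm[rule_format, of 0 0] herm[rule_format, of 1 1] herm[rule_format, of 1 0] by simp_all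
  define a where "a = hm (M 0 0)"
  define c where "c = hm (M 1 1)"
  define B where "B = hm (M 0 1)"
  define C0 where "C0 = hm (M 1 0)"
  define C where "C = (\<lambda>u v. cnj (B v u))"
  have ha: "a 1 0 = cnj (a 0 1)" "cnj (a 0 0) = a 0 0" "cnj (a 1 1) = a 1 1"
    using herm_hm[OF h00, of 1 0] herm_hm[OF h00, of 0 0] herm_hm[OF h00, of 1 1]
    unfolding a_def by simp_all
  have hc: "c 1 0 = cnj (c 0 1)" "cnj (c 0 0) = c 0 0" "cnj (c 1 1) = c 1 1"
    using herm_hm[OF h11, of 1 0] herm_hm[OF h11, of 0 0] herm_hm[OF h11, of 1 1]
    unfolding c_def by simp_all
  have hC: "C0 u v = C u v" if "u < 2" "v < 2" for u v
    using herm_hm[OF h10 that] unfolding C0_def C_def B_def .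
  have qfC: "qf C0 x0 x1 = qf C x0 x1" for x0 x1
    unfolding qf_def using hC[of 0 0] hC[of 0 1] hC[of 1 0] hC[of 1 1] by simp
  have DDC: "DD B C0 = DD B C"
    unfolding DD_def using hC[of 0 0] hC[of 0 1] hC[of 1 0] hC[of 1 1] by simp
  have hermC: "\<forall>u v. C u v = cnj (B v u)" unfolding C_def by simp
  have GGpos: "\<forall>t0 t1 x0 x1. (t0 \<noteq> 0 \<or> t1 \<noteq> 0) \<longrightarrow> (x0 \<noteq> 0 \<or> x1 \<noteq> 0) \<longrightarrow>
                 (\<exists>N>0. GG a B C c t0 t1 x0 x1 = of_real N)"
  proof (intro allI impI)
    fix t0 t1 x0 x1 :: complex
    assume t: "t0 \<noteq> 0 \<or> t1 \<noteq> 0" and x: "x0 \<noteq> 0 \<or> x1 \<noteq> 0"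
    define \<theta> where "\<theta> = (\<lambda>i::nat. if i = 0 then t0 else t1)"
    have "\<exists>i<2. \<theta> i \<noteq> 0"
    proof (cases "t0 = 0")
      case True hence "\<theta> 1 \<noteq> 0" using t by (simp add: \<theta>_def)
      thus ?thesis by (intro exI[of _ 1]) simp
    next
      case False hence "\<theta> 0 \<noteq> 0" by (simp add: \<theta>_def)
      thus ?thesis by (intro exI[of _ 0]) simp
    qed
    hence KT: "kaehler 2 (\<lambda>S. \<Sum>i<2. \<Sum>j<2. \<theta> i * M i j S * cnj (\<theta> j))" using pos by blast
    obtain N where N: "N > 0" "qf (hm (\<lambda>S. \<Sum>i<2. \<Sum>j<2. \<theta> i * M i j S * cnj (\<theta> j))) x0 x1 = of_real N"
      using kaehler_pos[OF KT x] by blast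
    have "qf (hm (\<lambda>S. \<Sum>i<2. \<Sum>j<2. \<theta> i * M i j S * cnj (\<theta> j))) x0 x1 = GG a B C0 c t0 t1 x0 x1"
      unfolding qf_def GG_def hm00 hm01 hm10 hm11 a_def B_def C0_def c_def sum2 \<theta>_def
      by (simp add: algebra_simps)
    also have "\<dots> = GG a B C c t0 t1 x0 x1" unfolding GG_def qfC ..
    finally show "\<exists>N>0. GG a B C c t0 t1 x0 x1 = of_real N" using N by auto
  qed
  obtain N where N: "N > 0" "DD a c - DD B C = of_real N"
    using core[OF ha hc hermC GGpos] by blast
  have "4 * det2 M top4 = DD a c - DD B C0"
    unfolding det2_def a_def c_def B_def C0_def
    using wedge_top_DD[OF V00, of "M 1 1"] wedge_top_DD[OF V01, of "M 1 0"]
    by (simp add: algebra_simps)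
  hence dtop: "det2 M top4 = of_real (N / 4)" using N DDC by (simp add: field_simps)
  have "wedge (M 0 0) (M 1 1) \<in> Vpq 2 (1+1) (1+1)" by (rule wedge_Vpq[OF V00 V11])
  hence W1: "wedge (M 0 0) (M 1 1) \<in> Vpq 2 2 2" unfolding one_add_one .
  have "wedge (M 0 1) (M 1 0) \<in> Vpq 2 (1+1) (1+1)" by (rule wedge_Vpq[OF V01 V10])
  hence W2: "wedge (M 0 1) (M 1 0) \<in> Vpq 2 2 2" unfolding one_add_one .
  have "det2 M = (\<lambda>S. 1 * wedge (M 0 0) (M 1 1) S + (-1) * wedge (M 0 1) (M 1 0) S)"
    unfolding det2_def by simp
  hence DV: "det2 M \<in> Vpq 2 2 2" using Vpq_lin[OF W1 W2, of 1 "-1"] by (simp only:)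
  obtain e where e: "e > 0" "wpow \<omega> 2 top4 = of_real e" using kaehler_top(1)[OF K] by blast
  have WV: "wpow \<omega> 2 \<in> Vpq 2 2 2" using kaehler_top(2)[OF K] .
  define P where "P = (\<lambda>t::real. \<lambda>S. complex_of_real (1 - t) * det2 M S + complex_of_real t * wpow \<omega> 2 S)"
  have PV: "P t \<in> Vpq 2 2 2" for t unfolding P_def by (rule Vpq_lin[OF DV WV])
  have Ptop: "P t top4 = of_real ((1 - t) * (N / 4) + t * e)" for t
    unfolding P_def using dtop e(2) by simp
  have Ppos: "(1 - t) * (N / 4) + t * e > 0" if "t \<in> {0..1}" for t
  proof (cases "t = 0")
    case True thus ?thesis using N by simp
  next
    case False
    hence "t * e > 0" using that e by auto
    moreover have "(1 - t) * (N / 4) \<ge> 0" using that N by auto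
    ultimately show ?thesis by linarith
  qed
  have PVR: "P t \<in> VR 2 2" for t
  proof -
    have "conj_form 2 (P t) = P t"
      by (rule conj_top) (use V22_support[OF PV] Ptop in auto)
    thus ?thesis using PV unfolding VR_def by simp
  qed
  have PL: "lefschetz 2 0 0 (P t)" if "t \<in> {0..1}" for t
    by (rule lefschetz_top[OF PV]) (unfold Ptop of_real_eq_0_iff, use Ppos[OF that] in linarith)
  have P0: "P 0 = det2 M" unfolding P_def by simp
  have P1: "P 1 = wpow \<omega> 2" unfolding P_def by simp
  have cont: "\<forall>S. continuous_on {0..1} (\<lambda>t. P t S)"
    unfolding P_def by (intro allI continuous_intros)
  show "hodge_riemann 2 \<omega> 2 (det2 M)"
    unfolding hodge_riemann_def
  proof (intro conjI allI impI)
    show "det2 M \<in> VR 2 2" using PVR[of 0] P0 by simp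
  next
    fix p q :: nat assume pq: "p + q = 2 - 2"
    hence p0: "p = 0" and q0: "q = 0" by auto
    show "\<exists>P :: real \<Rightarrow> form. (\<forall>S. continuous_on {0..1} (\<lambda>t. P t S)) \<and>
            P 0 = det2 M \<and> P 1 = wpow \<omega> 2 \<and> (\<forall>t\<in>{0..1}. P t \<in> VR 2 2) \<and>
            (\<forall>r \<le> min p q. \<forall>t\<in>{0..1}. lefschetz 2 (p - r) (q - r) (wedge (P t) (wpow \<omega> (2 * r))))"
    proof (intro exI conjI)
      show "\<forall>S. continuous_on {0..1} (\<lambda>t. P t S)" by (rule cont)
      show "P 0 = det2 M" by (rule P0)
      show "P 1 = wpow \<omega> 2" by (rule P1)
      show "\<forall>t\<in>{0..1}. P t \<in> VR 2 2" using PVR by blast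
      show "\<forall>r \<le> min p q. \<forall>t\<in>{0..1}. lefschetz 2 (p - r) (q - r) (wedge (P t) (wpow \<omega> (2 * r)))"
      proof (intro allI impI ballI)
        fix r t assume r: "r \<le> min p q" and t: "t \<in> {0..1::real}"
        have r0: "r = 0" using r p0 q0 by simp
        have "wedge (P t) (wpow \<omega> (2 * r)) = P t"
          using r0 wedge_unit_right[OF PV] by simp
        thus "lefschetz 2 (p - r) (q - r) (wedge (P t) (wpow \<omega> (2 * r)))"
          using PL[OF t] p0 q0 r0 by simp
      qed
    qed
  qed
qed

end
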